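(* Let $S$ be a set of $n$ points in $\mathbb{R}^d$, where $d$ is a constant, with Euclidean distance; let $\varepsilon>0$ be a real constant, let $\theta$ be a constant with $0<\theta<\pi/4$ such that $1/(\cos\theta-\sin\theta)\le 1+\varepsilon$, let $\mathcal{C}$ be a cone collection as in the context consisting of $O(1/\theta^{d-1})$ cones, and let $f\ge0$ be an integer. Then each of the graphs $\mathrm{Yao}(\theta,2f+1)$ and $\Theta(\theta,2f+1)$ is an $f$-faulty-degree $(1+\varepsilon)$-spanner for $S$ with $O(fn)$ edges.
   Context: $K_S$ is the complete graph on $S$ with edge weights the Euclidean distances; all graphs have Euclidean edge weights; $\delta_X$ is shortest-path distance in $X$; $X\setminus F$ is $X$ with the edges of $F$ removed. A graph $G=(S,E)$ is an $f$-faulty-degree $t$-spanner for $S$ if for every $F\subseteq E$ with $(S,F)$ of maximum degree at most $f$ and all $p,q\in S$, $\delta_{G\setminus F}(p,q)\le t\,\delta_{K_S\setminus F}(p,q)$. $\mathcal{C}$ is a finite collection of cones with apex at the origin covering $\mathbb{R}^d$, each of angular diameter at most $\theta$, i.e. $\max\{\angle(0x,0y):x,y\in C\setminus\{0\}\}\le\theta$. For each $C\in\mathcal{C}$ fix a ray $\ell_C$ from the origin contained in $C$. For $p\in S$: $C+p=\{x+p:x\in C\}$, $\ell_C+p$ is the translate of $\ell_C$ emanating from $p$, and $S_{p,C}=(C+p)\cap(S\setminus\{p\})$. The graph $\mathrm{Yao}(\theta,k)$ has vertex set $S$ and, for each $p\in S$ and $C\in\mathcal{C}$, an edge from $p$ to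 each of the $\min(k,|S_{p,C}|)$ points of $S_{p,C}$ closest to $p$ in Euclidean distance (ties broken arbitrarily). The graph $\Theta(\theta,k)$ has vertex set $S$ and, for each $p\in S$ and $C\in\mathcal{C}$, an edge from $p$ to each of $\min(k,|S_{p,C}|)$ points of $S_{p,C}$ whose orthogonal projections onto $\ell_C+p$ are closest to $p$ (ties broken arbitrarily). *)

theory Defs
  imports "HOL-Analysis.Analysis"
begin

definition vec_angle :: "'a::euclidean_space \<Rightarrow> 'a \<Rightarrow> real" where
  "vec_angle x y = arccos ((x \<bullet> y) / (norm x * norm y))"

text \<open>Graphs on point sets: undirected edges are two-element sets {p,q}.
  Edge weights are Euclidean distances.\<close>
definition complete_edges :: "'a::euclidean_space set \<Rightarrow> 'a set set" where
  "complete_edges S = {{p, q} | p q. p \<in> S \<and> q \<in> S \<and> p \<noteq> q}"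

definition is_walk :: "'a set set \<Rightarrow> 'a \<Rightarrow> 'a \<Rightarrow> 'a list \<Rightarrow> bool" where
  "is_walk E p q w \<longleftrightarrow> w \<noteq> [] \<and> hd w = p \<and> last w = q \<and>
     (\<forall>i < length w - 1. {w ! i, w ! Suc i} \<in> E)"

definition walk_length :: "'a::euclidean_space list \<Rightarrow> real" where
  "walk_length w = (\<Sum>i < length w - 1. dist (w ! i) (w ! Suc i))"

text \<open>Shortest-path distance (infinite if no path exists).\<close>
definition gdist :: "'a::euclidean_space set set \<Rightarrow> 'a \<Rightarrow> 'a \<Rightarrow> ereal" where
  "gdist E p q = Inf {ereal (walk_length w) | w. is_walk E p q w}"

definition max_degree_le :: "'a set \<Rightarrow> 'a set set \<Rightarrow> nat \<Rightarrow> bool" where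
  "max_degree_le S F f \<longleftrightarrow> (\<forall>v\<in>S. card {e \<in> F. v \<in> e} \<le> f)"

definition faulty_degree_spanner ::
  "'a::euclidean_space set \<Rightarrow> 'a set set \<Rightarrow> nat \<Rightarrow> real \<Rightarrow> bool" where
  "faulty_degree_spanner S E f t \<longleftrightarrow> E \<subseteq> complete_edges S \<and>
     (\<forall>F \<subseteq> E. max_degree_le S F f \<longrightarrow>
        (\<forall>p\<in>S. \<forall>q\<in>S. gdist (E - F) p q \<le> ereal t * gdist (complete_edges S - F) p q))"

definition cone_collection ::
  "'a::euclidean_space set set \<Rightarrow> ('a set \<Rightarrow> 'a) \<Rightarrow> real \<Rightarrow> bool" where
  "cone_collection \<C> ray \<theta> \<longleftrightarrow> finite \<C> \<and> \<Union>\<C> = UNIV \<and>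
     (\<forall>C\<in>\<C>. cone C \<and>
        (\<forall>x\<in>C - {0}. \<forall>y\<in>C - {0}. vec_angle x y \<le> \<theta>) \<and>
        ray C \<noteq> 0 \<and> {t *\<^sub>R ray C | t. t \<ge> 0} \<subseteq> C)"

definition cone_pts :: "'a::euclidean_space set \<Rightarrow> 'a \<Rightarrow> 'a set \<Rightarrow> 'a set" where
  "cone_pts S p C = {x + p | x. x \<in> C} \<inter> (S - {p})"

text \<open>Generic k-nearest-in-each-cone graph w.r.t. a key (distance measure from p);
  ties are broken arbitrarily, i.e. any valid choice N is allowed.\<close>
definition cone_knn_graph ::
  "('a \<Rightarrow> 'a set \<Rightarrow> 'a \<Rightarrow> real) \<Rightarrow> 'a::euclidean_space set set \<Rightarrow> nat \<Rightarrow> 'a set \<Rightarrow> 'a set set \<Rightarrow> bool" where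
  "cone_knn_graph key \<C> k S E \<longleftrightarrow> (\<exists>N :: 'a \<Rightarrow> 'a set \<Rightarrow> 'a set.
     (\<forall>p\<in>S. \<forall>C\<in>\<C>. N p C \<subseteq> cone_pts S p C \<and>
        card (N p C) = min k (card (cone_pts S p C)) \<and>
        (\<forall>q\<in>N p C. \<forall>r\<in>cone_pts S p C - N p C. key p C q \<le> key p C r)) \<and>
     E = {{p, q} | p q. p \<in> S \<and> (\<exists>C\<in>\<C>. q \<in> N p C)})"

definition yao_graph :: "'a::euclidean_space set set \<Rightarrow> nat \<Rightarrow> 'a set \<Rightarrow> 'a set set \<Rightarrow> bool" where
  "yao_graph \<C> k S E \<longleftrightarrow> cone_knn_graph (\<lambda>p C q. dist p q) \<C> k S E"

definition proj_dist :: "('a::euclidean_space set \<Rightarrow> 'a) \<Rightarrow> 'a \<Rightarrow> 'a set \<Rightarrow> 'a \<Rightarrow> real" where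
  "proj_dist ray p C q = dist p (p + (((q - p) \<bullet> ray C) / (ray C \<bullet> ray C)) *\<^sub>R ray C)"

definition theta_graph ::
  "'a::euclidean_space set set \<Rightarrow> ('a set \<Rightarrow> 'a) \<Rightarrow> nat \<Rightarrow> 'a set \<Rightarrow> 'a set set \<Rightarrow> bool" where
  "theta_graph \<C> ray k S E \<longleftrightarrow> cone_knn_graph (proj_dist ray) \<C> k S E"

end

theory Submission
  imports Defs
begin

lemma cone_pts_iff: "q \<in> cone_pts S p C \<longleftrightarrow> q - p \<in> C \<and> q \<in> S \<and> q \<noteq> p"
  unfolding cone_pts_def by (auto intro!: exI[of _ "q - p"])

lemma is_walk_cons2:
  "is_walk E p q (x # y # ys) \<longleftrightarrow> p = x \<and> {x,y} \<in> E \<and> is_walk E y q (y # ys)"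
  unfolding is_walk_def by (auto simp: All_less_Suc2)

lemma walk_length_cons2:
  "walk_length (x # y # ys) = dist x y + walk_length (y # ys)"
  unfolding walk_length_def by (simp del: sum.lessThan_Suc add: sum.lessThan_Suc_shift)

lemma walk_single: "is_walk E p q [x] \<longleftrightarrow> p = x \<and> q = x"
  unfolding is_walk_def by auto

lemma walk_length_single: "walk_length [x] = 0"
  unfolding walk_length_def by simp

lemma angle_cos:
  fixes u v :: "'a::euclidean_space"
  assumes "vec_angle u v \<le> \<theta>" "\<theta> \<le> pi"
  shows "u \<bullet> v \<ge> cos \<theta> * (norm u * norm v)"
proof (cases "u = 0 \<or> v = 0")
  case True
  have "cos \<theta> * (norm u * norm v) = 0" using True by auto
  then show ?thesis using True by auto
next
  case False
  define x where "x = (u \<bullet> v) / (norm u * norm v)"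
  have pos: "norm u * norm v > 0" using False by auto
  have "\<bar>u \<bullet> v\<bar> \<le> norm u * norm v" by (rule Cauchy_Schwarz_ineq2)
  hence x1: "-1 \<le> x" "x \<le> 1" using pos unfolding x_def by (auto simp: divide_simps abs_le_iff)
  have "arccos x \<le> \<theta>" using assms(1) unfolding vec_angle_def x_def .
  hence "cos \<theta> \<le> cos (arccos x)"
    using assms(2) x1 by (intro cos_monotone_0_pi_le) (auto intro: arccos_lbound)
  hence "cos \<theta> \<le> x" using x1 by simp
  thus ?thesis using pos unfolding x_def by (simp add: divide_simps)
qed

lemma geo_core:
  fixes u v :: "'a::euclidean_space"
  assumes u0: "u \<noteq> 0" and uv: "u \<bullet> v \<ge> c * (norm u * norm v)"
    and acb: "c * norm u \<le> norm v"
    and cs: "c\<^sup>2 + s\<^sup>2 = 1" and s0: "s \<ge> 0" and m0: "c - s > 0"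
    and tm: "t * (c - s) \<ge> 1" and t1: "t \<ge> 1"
  shows "norm u + t * norm (v - u) \<le> t * norm v \<and> norm (v - u) < norm v"
proof -
  define a where "a = norm u"
  define b where "b = norm v"
  define m where "m = c - s"
  have a0: "a > 0" using u0 a_def by auto
  have c0: "c > 0" using m0 s0 by linarith
  have nsq: "(norm (v - u))\<^sup>2 = a\<^sup>2 + b\<^sup>2 - 2 * (u \<bullet> v)"
    unfolding a_def b_def by (simp add: power2_norm_eq_inner algebra_simps inner_commute)
  have "a\<^sup>2 + b\<^sup>2 - 2 * (u \<bullet> v) \<le> a\<^sup>2 + b\<^sup>2 - 2 * a * b * c"
    using uv unfolding a_def b_def by (simp add: algebra_simps)
  also have "\<dots> \<le> (b - m * a)\<^sup>2"
  proof -
    have "a * c \<le> b" using acb a_def b_def by (simp add: mult.commute)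
    hence "a * c * (2 * a * s) \<le> b * (2 * a * s)" using a0 s0 by (intro mult_right_mono) auto
    moreover have "(b - m * a)\<^sup>2 = b\<^sup>2 - 2 * a * b * c + a\<^sup>2 + (2 * a * b * s - 2 * a * a * c * s)"
      unfolding m_def using cs by algebra
    ultimately show ?thesis by (simp add: algebra_simps)
  qed
  finally have sq: "(norm (v - u))\<^sup>2 \<le> (b - m * a)\<^sup>2" using nsq by simp
  have "m * a \<le> c * a" using s0 a0 unfolding m_def by (intro mult_right_mono) auto
  hence bm: "b - m * a \<ge> 0" using acb a_def b_def by (simp add: mult.commute)
  have le: "norm (v - u) \<le> b - m * a" using power2_le_imp_le[OF sq bm] .
  have "m * a > 0" using m0 a0 m_def by simp
  hence strict: "norm (v - u) < norm v" using le b_def by linarith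
  have "t * norm (v - u) \<le> t * (b - m * a)" using le t1 by (intro mult_left_mono) auto
  hence "t * norm (v - u) \<le> t * b - (t * m) * a" by (simp add: algebra_simps)
  moreover have "(t * m) * a \<ge> a" using tm a0 m_def by simp
  ultimately have "a + t * norm (v - u) \<le> t * b" by linarith
  thus ?thesis using strict a_def b_def by simp
qed

lemma cos_gt_sin:
  assumes "0 < \<theta>" "\<theta> < pi / 4"
  shows "cos \<theta> - sin \<theta> > 0"
proof -
  have "sin \<theta> < sin (pi/4)" using assms by (subst sin_mono_less_eq) auto
  moreover have "cos (pi/4) < cos \<theta>" using assms by (subst cos_mono_less_eq) auto
  ultimately show ?thesis by (simp add: cos_45 sin_45)
qed

lemma cc_angle:
  assumes "cone_collection \<C> ray \<theta>" "C \<in> \<C>" "x \<in> C" "y \<in> C" "x \<noteq> 0" "y \<noteq> 0" "\<theta> \<le> pi"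
  shows "x \<bullet> y \<ge> cos \<theta> * (norm x * norm y)"
  using assms unfolding cone_collection_def by (intro angle_cos) auto

lemma geo_cc:
  fixes p q r :: "'a::euclidean_space"
  assumes cc: "cone_collection \<C> ray \<theta>" and th: "0 < \<theta>" "\<theta> < pi / 4"
    and tm: "t * (cos \<theta> - sin \<theta>) \<ge> 1" and t1: "t \<ge> 1"
    and C: "C \<in> \<C>" and q: "q \<in> cone_pts S p C" and r: "r \<in> cone_pts S p C"
    and acb: "cos \<theta> * dist p r \<le> dist p q"
  shows "dist p r + t * dist r q \<le> t * dist p q \<and> dist r q < dist p q"
proof -
  have u: "r - p \<in> C" "r - p \<noteq> 0" and v: "q - p \<in> C" "q - p \<noteq> 0"
    using q r by (auto simp: cone_pts_iff)
  have ang: "(r - p) \<bullet> (q - p) \<ge> cos \<theta> * (norm (r - p) * norm (q - p))"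
    using cc_angle[OF cc C u(1) v(1) u(2) v(2)] th by simp
  have e1: "dist p r = norm (r - p)" "dist p q = norm (q - p)" "dist r q = norm ((q - p) - (r - p))"
    by (simp_all add: dist_norm norm_minus_commute)
  have "norm (r - p) + t * norm ((q - p) - (r - p)) \<le> t * norm (q - p) \<and> norm ((q - p) - (r - p)) < norm (q - p)"
    apply (rule geo_core[where s = "sin \<theta>"])
    using u(2) ang acb e1 cos_gt_sin[OF th] tm t1 th by (auto intro: sin_ge_zero)
  thus ?thesis using e1 by simp
qed

lemma geo_yao:
  fixes p q r :: "'a::euclidean_space"
  assumes cc: "cone_collection \<C> ray \<theta>" and th: "0 < \<theta>" "\<theta> < pi / 4"
    and tm: "t * (cos \<theta> - sin \<theta>) \<ge> 1" and t1: "t \<ge> 1"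
    and C: "C \<in> \<C>" and q: "q \<in> cone_pts S p C" and r: "r \<in> cone_pts S p C"
    and k: "dist p r \<le> dist p q"
  shows "dist p r + t * dist r q \<le> t * dist p q \<and> dist r q < dist p q"
proof (rule geo_cc[OF cc th tm t1 C q r])
  have "cos \<theta> * dist p r \<le> 1 * dist p r" by (intro mult_right_mono) auto
  thus "cos \<theta> * dist p r \<le> dist p q" using k by simp
qed

lemma proj_dist_eq:
  fixes w :: "'a::euclidean_space"
  assumes "ray C = w" "w \<noteq> 0"
  shows "proj_dist ray p C q = \<bar>(q - p) \<bullet> w\<bar> / norm w"
proof -
  have "proj_dist ray p C q = \<bar>((q - p) \<bullet> w) / (w \<bullet> w)\<bar> * norm w"
    unfolding proj_dist_def assms(1) by (simp add: dist_norm)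
  also have "\<dots> = \<bar>(q - p) \<bullet> w\<bar> / norm w"
    using assms(2) by (simp add: power2_norm_eq_inner[symmetric] power2_eq_square abs_divide)
  finally show ?thesis .
qed

lemma geo_theta:
  fixes p q r :: "'a::euclidean_space"
  assumes cc: "cone_collection \<C> ray \<theta>" and th: "0 < \<theta>" "\<theta> < pi / 4"
    and tm: "t * (cos \<theta> - sin \<theta>) \<ge> 1" and t1: "t \<ge> 1"
    and C: "C \<in> \<C>" and q: "q \<in> cone_pts S p C" and r: "r \<in> cone_pts S p C"
    and k: "proj_dist ray p C r \<le> proj_dist ray p C q"
  shows "dist p r + t * dist r q \<le> t * dist p q \<and> dist r q < dist p q"
proof (rule geo_cc[OF cc th tm t1 C q r])
  define w where "w = ray C"
  have sub: "{t *\<^sub>R w |t. 0 \<le> t} \<subseteq> C" and w0: "w \<noteq> 0"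
    using cc C unfolding cone_collection_def w_def by auto
  have "w \<in> {t *\<^sub>R w |t. 0 \<le> t}" by (auto intro!: exI[of _ 1])
  hence w: "w \<noteq> 0" "w \<in> C" using sub w0 by auto
  have u: "r - p \<in> C" "r - p \<noteq> 0" and v: "q - p \<in> C" "q - p \<noteq> 0"
    using q r by (auto simp: cone_pts_iff)
  have ang: "(r - p) \<bullet> w \<ge> cos \<theta> * (norm (r - p) * norm w)"
    using cc_angle[OF cc C u(1) w(2) u(2) w(1)] th by simp
  have nw: "norm w > 0" using w by simp
  have "\<bar>(r - p) \<bullet> w\<bar> / norm w \<le> \<bar>(q - p) \<bullet> w\<bar> / norm w"
    using k proj_dist_eq[of ray C w, OF w_def[symmetric] w(1)] by simp
  hence "\<bar>(r - p) \<bullet> w\<bar> \<le> \<bar>(q - p) \<bullet> w\<bar>" using nw by (simp add: divide_right_mono_neg divide_le_cancel)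
  also have "\<dots> \<le> norm (q - p) * norm w" by (rule Cauchy_Schwarz_ineq2)
  finally have "cos \<theta> * norm (r - p) * norm w \<le> norm (q - p) * norm w" using ang by simp
  hence "cos \<theta> * norm (r - p) \<le> norm (q - p)" using nw by simp
  thus "cos \<theta> * dist p r \<le> dist p q" by (simp add: dist_norm norm_minus_commute)
qed

lemma pair_lemma:
  fixes S :: "'a::euclidean_space set"
  assumes N: "\<forall>p\<in>S. \<forall>C\<in>\<C>. N p C \<subseteq> cone_pts S p C \<and>
        card (N p C) = min (2 * f + 1) (card (cone_pts S p C)) \<and>
        (\<forall>q\<in>N p C. \<forall>r\<in>cone_pts S p C - N p C. key p C q \<le> key p C r)"
    and EN: "E = {{p, q} | p q. p \<in> S \<and> (\<exists>C\<in>\<C>. q \<in> N p C)}"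
    and geo: "\<forall>p\<in>S. \<forall>C\<in>\<C>. \<forall>q\<in>cone_pts S p C. \<forall>r\<in>cone_pts S p C.
        key p C r \<le> key p C q \<longrightarrow> dist p r + t * dist r q \<le> t * dist p q \<and> dist r q < dist p q"
    and cover: "\<Union>\<C> = UNIV" and t1: "t \<ge> 1" and fin: "finite S"
    and FE: "F \<subseteq> E" and deg: "max_degree_le S F f"
  shows "p \<in> S \<Longrightarrow> q \<in> S \<Longrightarrow> p \<noteq> q \<Longrightarrow> {p, q} \<notin> F \<Longrightarrow> is_walk (E - F) q z w \<Longrightarrow>
    \<exists>w'. is_walk (E - F) p z w' \<and> walk_length w' \<le> t * dist p q + walk_length w"
proof (induction "card {(x, y). x \<in> S \<and> y \<in> S \<and> dist x y < dist p q}" arbitrary: p q rule: less_induct)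
  case less
  have NS: "\<And>p C. p \<in> S \<Longrightarrow> C \<in> \<C> \<Longrightarrow> N p C \<subseteq> S"
  proof -
    fix p C assume "p \<in> S" "C \<in> \<C>"
    hence "N p C \<subseteq> cone_pts S p C" using N by blast
    thus "N p C \<subseteq> S" by (auto simp: cone_pts_def)
  qed
  have Epow: "E \<subseteq> Pow S"
  proof
    fix e assume "e \<in> E"
    then obtain a b C where "e = {a, b}" "a \<in> S" "C \<in> \<C>" "b \<in> N a C" using EN by blast
    thus "e \<in> Pow S" using NS by blast
  qed
  have finF: "finite F" using FE Epow fin finite_subset[of F "Pow S"] by auto
  obtain C where C: "C \<in> \<C>" "q - p \<in> C" using cover by blast
  have qc: "q \<in> cone_pts S p C" using C less.prems by (simp add: cone_pts_iff)
  have "w \<noteq> []" "hd w = q" using less.prems(5) by (auto simp: is_walk_def)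
  then obtain ws where wq: "w = q # ws" by (cases w) auto
  show ?case
  proof (cases "q \<in> N p C")
    case True
    have "{p,q} \<in> E" using EN less.prems C True by blast
    hence e: "{p,q} \<in> E - F" using less.prems by blast
    have "is_walk (E - F) p z (p # w)" using wq e less.prems(5) by (simp add: is_walk_cons2)
    moreover have "walk_length (p # w) = dist p q + walk_length w" using wq by (simp add: walk_length_cons2)
    moreover have "dist p q \<le> t * dist p q" using t1 by (simp add: mult_le_cancel_right1)
    ultimately show ?thesis by (intro exI[of _ "p # w"]) auto
  next
    case False
    define P where "P = cone_pts S p C"
    have finP: "finite P" using fin by (auto simp: P_def cone_pts_def)
    have NP: "N p C \<subseteq> P" and cardN: "card (N p C) = min (2 * f + 1) (card P)"
      and keyN: "\<forall>r\<in>N p C. key p C r \<le> key p C q"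
    proof -
      have "N p C \<subseteq> cone_pts S p C \<and> card (N p C) = min (2 * f + 1) (card (cone_pts S p C)) \<and>
        (\<forall>q\<in>N p C. \<forall>r\<in>cone_pts S p C - N p C. key p C q \<le> key p C r)"
        using N less.prems(1) C(1) by blast
      thus "N p C \<subseteq> P" "card (N p C) = min (2 * f + 1) (card P)" "\<forall>r\<in>N p C. key p C r \<le> key p C q"
        using qc False unfolding P_def by auto
    qed
    have "N p C \<subset> P" using NP qc False P_def by blast
    hence "card (N p C) < card P" using finP psubset_card_mono by blast
    hence cN: "card (N p C) = 2 * f + 1" using cardN by simp
    define A where "A = {r \<in> N p C. {p, r} \<in> F}"
    define B where "B = {r \<in> N p C. {r, q} \<in> F}"
    have cA: "card A \<le> f"
    proof -
      have "inj_on (\<lambda>r. {p, r}) A"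
      proof (rule inj_onI)
        fix x y assume "x \<in> A" "y \<in> A" "{p, x} = {p, y}"
        moreover have "x \<noteq> p" "y \<noteq> p" using \<open>x \<in> A\<close> \<open>y \<in> A\<close> NP
          unfolding A_def P_def by (auto simp: cone_pts_iff)
        ultimately show "x = y" by (metis doubleton_eq_iff)
      qed
      moreover have "(\<lambda>r. {p, r}) ` A \<subseteq> {e \<in> F. p \<in> e}" unfolding A_def by auto
      ultimately have "card A \<le> card {e \<in> F. p \<in> e}"
        using finF by (intro card_inj_on_le) auto
      also have "\<dots> \<le> f" using deg less.prems(1) unfolding max_degree_le_def by auto
      finally show ?thesis .
    qed
    have cB: "card B \<le> f"
    proof -
      have "inj_on (\<lambda>r. {r, q}) B"
      proof (rule inj_onI)
        fix x y assume "x \<in> B" "y \<in> B" "{x, q} = {y, q}"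
        moreover have "x \<noteq> q" "y \<noteq> q" using \<open>x \<in> B\<close> \<open>y \<in> B\<close> False
          unfolding B_def by auto
        ultimately show "x = y" by (metis doubleton_eq_iff)
      qed
      moreover have "(\<lambda>r. {r, q}) ` B \<subseteq> {e \<in> F. q \<in> e}" unfolding B_def by auto
      ultimately have "card B \<le> card {e \<in> F. q \<in> e}"
        using finF by (intro card_inj_on_le) auto
      also have "\<dots> \<le> f" using deg less.prems(2) unfolding max_degree_le_def by auto
      finally show ?thesis .
    qed
    have finAB: "finite (A \<union> B)" using finP NP unfolding A_def B_def by (auto intro: finite_subset)
    have "card (A \<union> B) \<le> 2 * f" using cA cB card_Un_le[of A B] by linarith
    hence "\<not> N p C \<subseteq> A \<union> B"
    proof (intro notI)
      assume "card (A \<union> B) \<le> 2 * f" "N p C \<subseteq> A \<union> B"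
      hence "card (N p C) \<le> card (A \<union> B)" using finAB by (intro card_mono)
      thus False using cN \<open>card (A \<union> B) \<le> 2 * f\<close> by linarith
    qed
    then obtain r where r: "r \<in> N p C" "r \<notin> A" "r \<notin> B" by blast
    have rP: "r \<in> P" using r NP by auto
    have pr: "{p, r} \<notin> F" "{r, q} \<notin> F" using r unfolding A_def B_def by auto
    have rS: "r \<in> S" "r \<noteq> p" using rP by (auto simp: P_def cone_pts_iff)
    have rq: "r \<noteq> q" using r False by auto
    have g: "dist p r + t * dist r q \<le> t * dist p q \<and> dist r q < dist p q"
    proof -
      have "key p C r \<le> key p C q" using keyN r(1) by blast
      moreover have "r \<in> cone_pts S p C" using rP P_def by simp
      ultimately show ?thesis using geo less.prems(1) C(1) qc by blast
    qed
    have "{(x, y). x \<in> S \<and> y \<in> S \<and> dist x y < dist r q} \<subset> {(x, y). x \<in> S \<and> y \<in> S \<and> dist x y < dist p q}"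
    proof
      show "{(x, y). x \<in> S \<and> y \<in> S \<and> dist x y < dist r q} \<subseteq> {(x, y). x \<in> S \<and> y \<in> S \<and> dist x y < dist p q}"
        using g by auto
      have "(r, q) \<in> {(x, y). x \<in> S \<and> y \<in> S \<and> dist x y < dist p q}" using g rS less.prems by auto
      moreover have "(r, q) \<notin> {(x, y). x \<in> S \<and> y \<in> S \<and> dist x y < dist r q}" by auto
      ultimately show "{(x, y). x \<in> S \<and> y \<in> S \<and> dist x y < dist r q} \<noteq> {(x, y). x \<in> S \<and> y \<in> S \<and> dist x y < dist p q}"
        by blast
    qed
    moreover have "finite {(x, y). x \<in> S \<and> y \<in> S \<and> dist x y < dist p q}"
      by (rule finite_subset[of _ "S \<times> S"]) (use fin in auto)
    ultimately have lt: "card {(x, y). x \<in> S \<and> y \<in> S \<and> dist x y < dist r q} < card {(x, y). x \<in> S \<and> y \<in> S \<and> dist x y < dist p q}"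
      by (rule psubset_card_mono[rotated])
    obtain w1 where w1: "is_walk (E - F) r z w1" "walk_length w1 \<le> t * dist r q + walk_length w"
      using less.hyps[OF lt rS(1) less.prems(2) rq pr(2) less.prems(5)] by blast
    have "w1 \<noteq> []" "hd w1 = r" using w1(1) by (auto simp: is_walk_def)
    then obtain ws1 where w1r: "w1 = r # ws1" by (cases w1) auto
    have "{p, r} \<in> E" using EN less.prems(1) C(1) r(1) by blast
    hence e: "{p, r} \<in> E - F" using pr by blast
    have "is_walk (E - F) p z (p # w1)" using w1r e w1(1) by (simp add: is_walk_cons2)
    moreover have "walk_length (p # w1) = dist p r + walk_length w1" using w1r by (simp add: walk_length_cons2)
    ultimately show ?thesis using w1(2) g by (intro exI[of _ "p # w1"]) auto
  qed
qed

lemma complete_edgeD: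
  assumes "{a, b} \<in> complete_edges S"
  shows "a \<noteq> b \<and> a \<in> S \<and> b \<in> S"
proof -
  obtain x y where "{a, b} = {x, y}" "x \<in> S" "y \<in> S" "x \<noteq> y"
    using assms unfolding complete_edges_def by blast
  thus ?thesis by (metis doubleton_eq_iff)
qed

lemma walk_lemma:
  fixes S :: "'a::euclidean_space set"
  assumes N: "\<forall>p\<in>S. \<forall>C\<in>\<C>. N p C \<subseteq> cone_pts S p C \<and>
        card (N p C) = min (2 * f + 1) (card (cone_pts S p C)) \<and>
        (\<forall>q\<in>N p C. \<forall>r\<in>cone_pts S p C - N p C. key p C q \<le> key p C r)"
    and EN: "E = {{p, q} | p q. p \<in> S \<and> (\<exists>C\<in>\<C>. q \<in> N p C)}"
    and geo: "\<forall>p\<in>S. \<forall>C\<in>\<C>. \<forall>q\<in>cone_pts S p C. \<forall>r\<in>cone_pts S p C.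
        key p C r \<le> key p C q \<longrightarrow> dist p r + t * dist r q \<le> t * dist p q \<and> dist r q < dist p q"
    and cover: "\<Union>\<C> = UNIV" and t1: "t \<ge> 1" and fin: "finite S"
    and FE: "F \<subseteq> E" and deg: "max_degree_le S F f"
  shows "is_walk (complete_edges S - F) x z w \<Longrightarrow>
    \<exists>w'. is_walk (E - F) x z w' \<and> walk_length w' \<le> t * walk_length w"
proof (induction w arbitrary: x)
  case Nil
  then show ?case by (simp add: is_walk_def)
next
  case (Cons a w)
  show ?case
  proof (cases w)
    case Nil
    then have "x = a" "z = a" using Cons.prems by (auto simp: walk_single)
    then show ?thesis using Nil
      by (intro exI[of _ "[a]"]) (simp add: walk_single walk_length_single)
  next
    case (Cons b ws)
    have xa: "x = a" and e: "{a, b} \<in> complete_edges S - F" and wb: "is_walk (complete_edges S - F) b z (b # ws)"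
      using Cons.prems Cons by (auto simp: is_walk_cons2)
    have ab: "a \<noteq> b" "a \<in> S" "b \<in> S" using complete_edgeD[of a b S] e by auto
    obtain w2 where w2: "is_walk (E - F) b z w2" "walk_length w2 \<le> t * walk_length (b # ws)"
      using Cons.IH[OF wb[folded Cons]] Cons by auto
    obtain w' where w': "is_walk (E - F) a z w'" "walk_length w' \<le> t * dist a b + walk_length w2"
      using pair_lemma[OF N EN geo cover t1 fin FE deg ab(2) ab(3) ab(1) _ w2(1)] e by blast
    have "walk_length (a # w) = dist a b + walk_length (b # ws)" using Cons by (simp add: walk_length_cons2)
    hence "walk_length w' \<le> t * walk_length (a # w)" using w'(2) w2(2) by (simp add: algebra_simps)
    then show ?thesis using w' xa by blast
  qed
qed

lemma generic:
  fixes S :: "'a::euclidean_space set"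
  assumes knn: "cone_knn_graph key \<C> (2 * f + 1) S E"
    and geo: "\<forall>p\<in>S. \<forall>C\<in>\<C>. \<forall>q\<in>cone_pts S p C. \<forall>r\<in>cone_pts S p C.
        key p C r \<le> key p C q \<longrightarrow> dist p r + t * dist r q \<le> t * dist p q \<and> dist r q < dist p q"
    and cover: "\<Union>\<C> = UNIV" and finC: "finite \<C>" and t1: "t \<ge> 1" and fin: "finite S"
  shows "faulty_degree_spanner S E f t \<and> real (card E) \<le> real (2 * card \<C>) * real (f + 1) * real (card S)"
proof -
  obtain N where N: "\<forall>p\<in>S. \<forall>C\<in>\<C>. N p C \<subseteq> cone_pts S p C \<and>
        card (N p C) = min (2 * f + 1) (card (cone_pts S p C)) \<and>
        (\<forall>q\<in>N p C. \<forall>r\<in>cone_pts S p C - N p C. key p C q \<le> key p C r)"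
    and EN: "E = {{p, q} | p q. p \<in> S \<and> (\<exists>C\<in>\<C>. q \<in> N p C)}"
    using knn unfolding cone_knn_graph_def by blast
  have NS: "\<And>p C. p \<in> S \<Longrightarrow> C \<in> \<C> \<Longrightarrow> N p C \<subseteq> S - {p}"
  proof -
    fix p C assume "p \<in> S" "C \<in> \<C>"
    hence "N p C \<subseteq> cone_pts S p C" using N by blast
    thus "N p C \<subseteq> S - {p}" by (auto simp: cone_pts_def)
  qed
  have EK: "E \<subseteq> complete_edges S"
  proof
    fix e assume "e \<in> E"
    then obtain a b C where "e = {a, b}" "a \<in> S" "C \<in> \<C>" "b \<in> N a C" using EN by blast
    moreover have "b \<in> S - {a}" using NS calculation by blast
    ultimately show "e \<in> complete_edges S" unfolding complete_edges_def by blast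
  qed
  have span: "faulty_degree_spanner S E f t"
    unfolding faulty_degree_spanner_def
  proof (intro conjI EK allI impI ballI)
    fix F p q assume FE: "F \<subseteq> E" and deg: "max_degree_le S F f" and p: "p \<in> S" and q: "q \<in> S"
    define X where "X = {ereal (walk_length w) | w. is_walk (complete_edges S - F) p q w}"
    have "gdist (E - F) p q \<le> Inf {ereal t * x | x. x \<in> X}"
    proof (rule Inf_greatest)
      fix y assume "y \<in> {ereal t * x | x. x \<in> X}"
      then obtain w where y: "y = ereal t * ereal (walk_length w)" and w: "is_walk (complete_edges S - F) p q w"
        unfolding X_def by blast
      obtain w' where w': "is_walk (E - F) p q w'" "walk_length w' \<le> t * walk_length w"
        using walk_lemma[OF N EN geo cover t1 fin FE deg w] by blast
      have "gdist (E - F) p q \<le> ereal (walk_length w')"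
        unfolding gdist_def using w'(1) by (intro Inf_lower) blast
      also have "\<dots> \<le> y" using w'(2) y by simp
      finally show "gdist (E - F) p q \<le> y" .
    qed
    also have "\<dots> = ereal t * Inf {x. x \<in> X}"
      using t1 by (intro ereal_Inf_cmult) simp
    also have "\<dots> = ereal t * gdist (complete_edges S - F) p q"
      unfolding gdist_def X_def by simp
    finally show "gdist (E - F) p q \<le> ereal t * gdist (complete_edges S - F) p q" .
  qed
  define T where "T = (SIGMA p:S. \<Union>C\<in>\<C>. N p C)"
  have ET: "E = (\<lambda>(p, q). {p, q}) ` T" unfolding EN T_def by auto
  have finN: "\<And>p C. p \<in> S \<Longrightarrow> C \<in> \<C> \<Longrightarrow> finite (N p C)"
    using NS fin by (meson finite_Diff finite_subset)
  have cardN: "\<And>p C. p \<in> S \<Longrightarrow> C \<in> \<C> \<Longrightarrow> card (N p C) \<le> 2 * f + 1"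
  proof -
    fix p C assume "p \<in> S" "C \<in> \<C>"
    hence "card (N p C) = min (2 * f + 1) (card (cone_pts S p C))" using N by blast
    thus "card (N p C) \<le> 2 * f + 1" by simp
  qed
  have "card E \<le> card T" unfolding ET using fin finC finN
    by (intro card_image_le) (auto simp: T_def)
  also have "card T = (\<Sum>p\<in>S. card (\<Union>C\<in>\<C>. N p C))"
    unfolding T_def using fin finC finN by (intro card_SigmaI) auto
  also have "\<dots> \<le> (\<Sum>p\<in>S. \<Sum>C\<in>\<C>. card (N p C))"
    using finC finN by (intro sum_mono card_UN_le) auto
  also have "\<dots> \<le> (\<Sum>p\<in>S. \<Sum>C\<in>\<C>. 2 * f + 1)"
    using cardN by (intro sum_mono) auto
  also have "\<dots> = card S * (card \<C> * (2 * f + 1))" by simp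
  finally have "card E \<le> card S * (card \<C> * (2 * f + 1))" .
  hence "real (card E) \<le> real (card S * (card \<C> * (2 * f + 1)))"
    by (simp only: of_nat_le_iff)
  also have "\<dots> = real (card S) * (real (card \<C>) * (2 * real f + 1))" by (simp add: algebra_simps)
  also have "\<dots> \<le> real (card S) * (real (card \<C>) * (2 * real f + 2))"
    by (intro mult_left_mono) auto
  also have "\<dots> = real (2 * card \<C>) * real (f + 1) * real (card S)"
    by (simp add: algebra_simps)
  finally show ?thesis using span by simp
qed

theorem theorem4:
  fixes \<C> :: "'a::euclidean_space set set" and ray :: "'a set \<Rightarrow> 'a"
    and \<epsilon> \<theta> K :: real
  assumes "\<epsilon> > 0" and "0 < \<theta>" and "\<theta> < pi / 4"
    and "1 / (cos \<theta> - sin \<theta>) \<le> 1 + \<epsilon>"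
    and "cone_collection \<C> ray \<theta>"
    and "real (card \<C>) \<le> K / \<theta> ^ (DIM('a) - 1)"
  shows "\<exists>c. \<forall>(S :: 'a set) (f :: nat) E. finite S \<longrightarrow>
           (yao_graph \<C> (2 * f + 1) S E \<or> theta_graph \<C> ray (2 * f + 1) S E) \<longrightarrow>
           faulty_degree_spanner S E f (1 + \<epsilon>) \<and>
           real (card E) \<le> c * real (f + 1) * real (card S)"
proof (intro exI[of _ "real (2 * card \<C>)"] allI impI)
  fix S :: "'a set" and f :: nat and E
  assume fin: "finite S" and G: "yao_graph \<C> (2 * f + 1) S E \<or> theta_graph \<C> ray (2 * f + 1) S E"
  have cc: "cone_collection \<C> ray \<theta>" by fact
  have th: "0 < \<theta>" "\<theta> < pi / 4" by fact+
  have t1: "1 + \<epsilon> \<ge> 1" using assms(1) by simp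
  have m0: "cos \<theta> - sin \<theta> > 0" using cos_gt_sin[OF th] .
  have tm: "(1 + \<epsilon>) * (cos \<theta> - sin \<theta>) \<ge> 1"
    using assms(4) m0 by (simp add: divide_le_eq mult.commute)
  have cover: "\<Union>\<C> = UNIV" and finC: "finite \<C>" using cc unfolding cone_collection_def by auto
  from G show "faulty_degree_spanner S E f (1 + \<epsilon>) \<and>
           real (card E) \<le> real (2 * card \<C>) * real (f + 1) * real (card S)"
  proof
    assume "yao_graph \<C> (2 * f + 1) S E"
    hence knn: "cone_knn_graph (\<lambda>p C q. dist p q) \<C> (2 * f + 1) S E" unfolding yao_graph_def .
    show ?thesis
      by (rule generic[OF knn _ cover finC t1 fin]) (use geo_yao[OF cc th tm t1] in blast)
  next
    assume "theta_graph \<C> ray (2 * f + 1) S E"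
    hence knn: "cone_knn_graph (proj_dist ray) \<C> (2 * f + 1) S E" unfolding theta_graph_def .
    show ?thesis
      by (rule generic[OF knn _ cover finC t1 fin]) (use geo_theta[OF cc th tm t1] in blast)
  qed
qed

end
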